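(* Let $x,y,z\in[0,1]$ satisfy $2y=x+z$. Suppose that \[(1-\{x\})^2+(1-\{z\})^2-2(1-\{y\})^2<2\left(\frac{z-x}{2}\right)^2.\] Then $\min(x,z)<1/2\le y$.
   Context: For $x\in[0,1]$, $\{x\}:=x$ if $x<1/2$ and $\{x\}:=x-1/2$ if $x\ge 1/2$ (this is not the usual fractional part). *)

theory Defs
  imports Complex_Main
begin

definition hfrac :: "real \<Rightarrow> real" where
  "hfrac x = (if x < 1/2 then x else x - 1/2)"

end

theory Submission
  imports Defs
begin

theorem lemma4p2:
  fixes x y z :: real
  assumes "x \<in> {0..1}" and "y \<in> {0..1}" and "z \<in> {0..1}"
    and "2 * y = x + z"
    and "(1 - hfrac x)^2 + (1 - hfrac z)^2 - 2 * (1 - hfrac y)^2 < 2 * ((z - x) / 2)^2"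
  shows "min x z < 1/2 \<and> 1/2 \<le> y"
proof -
  have y: "y = (x + z) / 2" using assms(4) by simp
  note h = assms(5)[unfolded hfrac_def y]
  show ?thesis
  proof (rule ccontr)
    assume "\<not> ?thesis"
    hence c: "min x z \<ge> 1/2 \<or> y < 1/2" by auto
    show False
    proof (cases "x < 1/2")
      case True
      then show ?thesis
      proof (cases "z < 1/2")
        case True
        with \<open>x < 1/2\<close> h show ?thesis by (simp add: power2_eq_square field_simps)
      next
        case False
        with \<open>x < 1/2\<close> c y have "(x+z)/2 < 1/2" by auto
        with \<open>x < 1/2\<close> False h have "(1 - x)^2 + (1 - (z - 1/2))^2 - 2 * (1 - (x+z)/2)^2 < 2 * ((z - x) / 2)^2" by simp
        moreover have "(1 - x)^2 + (1 - (z - 1/2))^2 - 2 * (1 - (x+z)/2)^2 = 2 * ((z - x) / 2)^2 + ((3/2 - z)^2 - (1-z)^2)"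
          by (simp add: power2_eq_square field_simps)
        moreover have "(3/2 - z)^2 - (1-z)^2 = (5/2 - 2*z)/2" by (simp add: power2_eq_square field_simps)
        ultimately show ?thesis using assms(3) by auto
      qed
    next
      case False
      then show ?thesis
      proof (cases "z < 1/2")
        case True
        with False c y have "(x+z)/2 < 1/2" by auto
        with \<open>z < 1/2\<close> False h have "(1 - (x - 1/2))^2 + (1 - z)^2 - 2 * (1 - (x+z)/2)^2 < 2 * ((z - x) / 2)^2" by simp
        moreover have "(1 - (x - 1/2))^2 + (1 - z)^2 - 2 * (1 - (x+z)/2)^2 = 2 * ((z - x) / 2)^2 + ((3/2 - x)^2 - (1-x)^2)"
          by (simp add: power2_eq_square field_simps)
        moreover have "(3/2 - x)^2 - (1-x)^2 = (5/2 - 2*x)/2" by (simp add: power2_eq_square field_simps)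
        ultimately show ?thesis using assms(1) by auto
      next
        case False
        with \<open>\<not> x < 1/2\<close> have "\<not> (x+z)/2 < 1/2" by auto
        with \<open>\<not> x < 1/2\<close> False h show ?thesis by (simp add: power2_eq_square field_simps)
      qed
    qed
  qed
qed

end
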